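(* In the noisy setting, there is a sequence $\epsilon_n\to0$ (depending on $\beta,P_X,P_{Y\mid X}$) such that for all $n$ \[ P^*_{\mathrm{error}}\le 2(1+\epsilon_n)\left\{\beta\wedge\frac1{I(Y;\tilde Y)}\right\}\frac{\log n}{n}, \] with the convention $1/0=\infty$.
   Context: Setting. Let $\mathcal X,\mathcal Y$ be finite alphabets; logarithms are to base $|\mathcal X|$. Let $\mathbf X=\{X_i\}_{i\in\mathbb Z}$ be a random process on $\mathcal X$. Fix $\beta>0$; let $\ell=\ell(n)=\beta\log n$ (rounded to an integer) and $n_\ell:=n-(2\ell-1)$. Let $I(1)\sim\mathrm{Uniform}[n]$ and, conditionally on $I(1)$, let $I(2)$ be uniform on $I(1)+\{-\ell+1,\dots,n-\ell\}$ if $1\le I(1)\le \ell-1$, uniform on $[n]$ if $\ell\le I(1)\le n-\ell+1$, and uniform on $I(1)+\{\ell-n,\dots,\ell-1\}$ if $n-\ell+2\le I(1)\le n$; $(I(1),I(2))$ is independent of $\mathbf X$. Noiseless reads: $X_1^\ell(j):=X_{I(j)}^{I(j)+\ell-1}$, $j=1,2$. Signed overlap: $T:=\max\{0,\ell-(I(2)-I(1))\}$ if $I(2)\ge I(1)$, $T:=-\max\{0,\ell-(I(1)-I(2))\}$ if $I(2)<I(1)$, with values in $\mathcal T:=\{-(\ell-1),\dots,0,\dots,\ell\}$, $\mathbb P[T=0]=n_\ell/n$, $\mathbb P[T=t]=1/n$ for $t\ne0$. Noisy reads $Y_1^\ell(j)\in\mathcal Y^\ell$ are drawn from a kernel $P_{Y_1^\ell\mid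 X_1^\ell}$ given $X_1^\ell(j)$, conditionally independently given the noiseless reads. A detector is any map $\hat T:\mathcal Y^\ell\times\mathcal Y^\ell\to\mathcal T$; $P_{\mathrm{error}}(\hat T):=\mathbb P[\hat T(Y_1^\ell(1),Y_1^\ell(2))\ne T]$, $P^*_{\mathrm{error}}:=\min_{\hat T}P_{\mathrm{error}}(\hat T)$. Noisy setting: $\mathbf X$ is i.i.d. with marginal p.m.f. $P_X$, and $P_{Y_1^\ell\mid X_1^\ell}(y_1^\ell\mid x_1^\ell)=\prod_{i=1}^\ell P_{Y\mid X}(y_i\mid x_i)$ for a fixed channel $P_{Y\mid X}$. Let $P_Y$ be the $Y$-marginal of $P_X\otimes P_{Y\mid X}$, and $P_{Y\tilde Y}(y,\tilde y):=\sum_xP_X(x)P_{Y\mid X}(y\mid x)P_{Y\mid X}(\tilde y\mid x)$ (two independent channel outputs of the same input); $I(Y;\tilde Y)$ is the mutual information under $P_{Y\tilde Y}$. *)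

theory Defs
  imports "HOL-Probability.Probability"
begin

definition readlen :: "nat \<Rightarrow> real \<Rightarrow> nat \<Rightarrow> nat" where
  "readlen q \<beta> n = nat (round (\<beta> * log (real q) (real n)))"

definition I2set :: "nat \<Rightarrow> nat \<Rightarrow> int \<Rightarrow> int set" where
  "I2set n l i1 =
     (if 1 \<le> i1 \<and> i1 \<le> int l - 1 then {i1 - int l + 1 .. i1 + int n - int l}
      else if int l \<le> i1 \<and> i1 \<le> int n - int l + 1 then {1 .. int n}
      else {i1 + int l - int n .. i1 + int l - 1})"

definition overlap :: "nat \<Rightarrow> int \<Rightarrow> int \<Rightarrow> int" where
  "overlap l i1 i2 =
     (if i2 \<ge> i1 then max 0 (int l - (i2 - i1)) else - max 0 (int l - (i1 - i2)))"

definition Tset :: "nat \<Rightarrow> int set" where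
  "Tset l = {-(int l - 1) .. int l}"

definition read :: "nat \<Rightarrow> (int \<Rightarrow> 'x) \<Rightarrow> int \<Rightarrow> 'x list" where
  "read l X i = map (\<lambda>k. X (i + int k)) [0..<l]"

fun chan :: "('x \<Rightarrow> 'y pmf) \<Rightarrow> 'x list \<Rightarrow> 'y list pmf" where
  "chan W [] = return_pmf []"
| "chan W (x # xs) = do { y \<leftarrow> W x; ys \<leftarrow> chan W xs; return_pmf (y # ys) }"

text \<open>The i.i.d. process X is realised on a finite
  window of indices containing every position that can be read; this gives
  exactly the finite-dimensional marginals of the i.i.d. process.\<close>
definition joint :: "'x pmf \<Rightarrow> ('x \<Rightarrow> 'y pmf) \<Rightarrow> nat \<Rightarrow> nat \<Rightarrow> (int \<times> 'y list \<times> 'y list) pmf" where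
  "joint PX W l n = do {
      i1 \<leftarrow> pmf_of_set {1 .. int n};
      i2 \<leftarrow> pmf_of_set (I2set n l i1);
      X \<leftarrow> Pi_pmf {- int n - 2 * int l .. int n + 2 * int l} undefined (\<lambda>_. PX);
      y1 \<leftarrow> chan W (read l X i1);
      y2 \<leftarrow> chan W (read l X i2);
      return_pmf (overlap l i1 i2, y1, y2) }"

definition Perror :: "'x pmf \<Rightarrow> ('x \<Rightarrow> 'y pmf) \<Rightarrow> nat \<Rightarrow> nat \<Rightarrow> ('y list \<Rightarrow> 'y list \<Rightarrow> int) \<Rightarrow> real" where
  "Perror PX W l n g = measure_pmf.prob (joint PX W l n) {(t, y1, y2). g y1 y2 \<noteq> t}"

definition Perror_opt :: "'x::finite pmf \<Rightarrow> ('x \<Rightarrow> 'y pmf) \<Rightarrow> real \<Rightarrow> nat \<Rightarrow> real" where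
  "Perror_opt PX W \<beta> n =
     (let l = readlen CARD('x) \<beta> n in
      INF g \<in> {g. \<forall>a b. g a b \<in> Tset l}. Perror PX W l n g)"

definition PY :: "'x::finite pmf \<Rightarrow> ('x \<Rightarrow> 'y pmf) \<Rightarrow> 'y \<Rightarrow> real" where
  "PY PX W y = (\<Sum>x\<in>UNIV. pmf PX x * pmf (W x) y)"

definition PYY :: "'x::finite pmf \<Rightarrow> ('x \<Rightarrow> 'y pmf) \<Rightarrow> 'y \<Rightarrow> 'y \<Rightarrow> real" where
  "PYY PX W y y' = (\<Sum>x\<in>UNIV. pmf PX x * pmf (W x) y * pmf (W x) y')"

definition MI :: "'x::finite pmf \<Rightarrow> ('x \<Rightarrow> 'y::finite pmf) \<Rightarrow> real" where
  "MI PX W = (\<Sum>y\<in>UNIV. \<Sum>y'\<in>UNIV.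
      (if PYY PX W y y' = 0 then 0
       else PYY PX W y y' * log (real CARD('x)) (PYY PX W y y' / (PY PX W y * PY PX W y'))))"

definition coef :: "real \<Rightarrow> real \<Rightarrow> real" where
  "coef \<beta> I = (if I = 0 then \<beta> else min \<beta> (1 / I))"

end

theory Submission
  imports Defs "HOL-Analysis.Complex_Transcendental"
begin


lemma chan_Pi:
  assumes "distinct ps"
  shows "chan W (map X ps) = map_pmf (\<lambda>Z. map Z ps) (Pi_pmf (set ps) d (\<lambda>p. W (X p)))"
  using assms
proof (induction ps)
  case Nil
  then show ?case by simp
next
  case (Cons p ps)
  have "Pi_pmf (set (p # ps)) d (\<lambda>p. W (X p)) =
        do {y \<leftarrow> W (X p); f \<leftarrow> Pi_pmf (set ps) d (\<lambda>p. W (X p)); return_pmf (f(p := y))}"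
    using Cons.prems by (simp add: Pi_pmf_insert')
  then have "map_pmf (\<lambda>Z. map Z (p # ps)) (Pi_pmf (set (p # ps)) d (\<lambda>p. W (X p))) =
        do {y \<leftarrow> W (X p); f \<leftarrow> Pi_pmf (set ps) d (\<lambda>p. W (X p)); return_pmf (y # map f ps)}"
    using Cons.prems by (simp add: map_bind_pmf map_return_pmf)
  also have "\<dots> = do {y \<leftarrow> W (X p); ys \<leftarrow> map_pmf (\<lambda>Z. map Z ps) (Pi_pmf (set ps) d (\<lambda>p. W (X p))); return_pmf (y # ys)}"
    by (simp add: bind_map_pmf)
  also have "\<dots> = chan W (map X (p # ps))"
    using Cons by simp
  finally show ?case by simp
qed

lemma Pi_pmf_pair:
  assumes "finite S"
  shows "Pi_pmf S dq (\<lambda>p. pair_pmf (A p) (B p)) =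
     do {f \<leftarrow> Pi_pmf S d1 A; g \<leftarrow> Pi_pmf S d2 B; return_pmf (\<lambda>p. if p \<in> S then (f p, g p) else dq)}"
proof -
  have "Pi_pmf S dq (\<lambda>p. pair_pmf (A p) (B p)) =
     Pi_pmf S dq (\<lambda>p. bind_pmf (A p) (\<lambda>a. bind_pmf (B p) (\<lambda>b. return_pmf (a, b))))"
    by (simp add: pair_pmf_def)
  also have "\<dots> = do {f \<leftarrow> Pi_pmf S d1 A; Pi_pmf S dq (\<lambda>p. bind_pmf (B p) (\<lambda>b. return_pmf (f p, b)))}"
    using assms by (subst Pi_pmf_bind[where d'=d1]) auto
  also have "\<dots> = do {f \<leftarrow> Pi_pmf S d1 A; g \<leftarrow> Pi_pmf S d2 B; Pi_pmf S dq (\<lambda>p. return_pmf (f p, g p))}"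
    using assms by (subst Pi_pmf_bind[where d'=d2]) auto
  also have "\<dots> = do {f \<leftarrow> Pi_pmf S d1 A; g \<leftarrow> Pi_pmf S d2 B; return_pmf (\<lambda>p. if p \<in> S then (f p, g p) else dq)}"
    using assms by simp
  finally show ?thesis .
qed

definition Q0 :: "'x pmf \<Rightarrow> ('x \<Rightarrow> 'y pmf) \<Rightarrow> ('y \<times> 'y) pmf" where
  "Q0 PX W = bind_pmf PX (\<lambda>x. pair_pmf (W x) (W x))"

lemma chan_Pi_S:
  assumes "distinct ps" "finite S" "set ps \<subseteq> S"
  shows "chan W (map X ps) = map_pmf (\<lambda>Z. map Z ps) (Pi_pmf S d (\<lambda>p. W (X p)))"
proof -
  have "chan W (map X ps) = map_pmf (\<lambda>Z. map Z ps) (Pi_pmf (set ps) d (\<lambda>p. W (X p)))"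
    using assms(1) by (rule chan_Pi)
  also have "\<dots> = map_pmf (\<lambda>Z. map Z ps) (Pi_pmf S d (\<lambda>p. W (X p)))"
    using assms by (subst Pi_pmf_subset[of S]) (auto simp: pmf.map_comp o_def intro!: map_pmf_cong)
  finally show ?thesis .
qed

lemma R_repr:
  assumes "finite S" "distinct ps1" "distinct ps2" "set ps1 \<subseteq> S" "set ps2 \<subseteq> S"
  shows "do {X \<leftarrow> Pi_pmf S dx (\<lambda>_. PX); y1 \<leftarrow> chan W (map X ps1); y2 \<leftarrow> chan W (map X ps2);
             return_pmf (y1, y2)}
       = map_pmf (\<lambda>Q. (map (\<lambda>p. fst (Q p)) ps1, map (\<lambda>p. snd (Q p)) ps2)) (Pi_pmf S dq (\<lambda>_. Q0 PX W))"
proof -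
  have "Pi_pmf S dq (\<lambda>_. Q0 PX W) = do {X \<leftarrow> Pi_pmf S dx (\<lambda>_. PX); Pi_pmf S dq (\<lambda>p. pair_pmf (W (X p)) (W (X p)))}"
    unfolding Q0_def using assms(1) by (subst Pi_pmf_bind[where d'=dx]) auto
  also have "\<dots> = do {X \<leftarrow> Pi_pmf S dx (\<lambda>_. PX); f \<leftarrow> Pi_pmf S undefined (\<lambda>p. W (X p));
       g \<leftarrow> Pi_pmf S undefined (\<lambda>p. W (X p)); return_pmf (\<lambda>p. if p \<in> S then (f p, g p) else dq)}"
    using Pi_pmf_pair[OF assms(1), of dq "\<lambda>p. W (X p)" "\<lambda>p. W (X p)" undefined undefined for X] by simp
  finally have 1: "Pi_pmf S dq (\<lambda>_. Q0 PX W) = \<dots>" .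
  show ?thesis
    unfolding 1 using assms
    by (simp add: chan_Pi_S[where d=undefined and S=S] map_bind_pmf bind_map_pmf map_return_pmf
         subset_iff cong: map_cong)
qed



lemma finite_set_Pi_pmf:
  assumes "finite A" "\<And>x. x \<in> A \<Longrightarrow> finite (set_pmf (p x))"
  shows "finite (set_pmf (Pi_pmf A d p))"
  using assms by (subst set_Pi_pmf) auto

lemma integral_fin:
  fixes f :: "'a \<Rightarrow> real"
  assumes "finite (set_pmf M)"
  shows "(\<integral>x. f x \<partial>M) = (\<Sum>a\<in>set_pmf M. f a * pmf M a)"
  using assms by (intro integral_measure_pmf_real) auto

lemma integral_pair_pmf_fin:
  fixes f :: "'a \<times> 'b \<Rightarrow> real"
  assumes "finite (set_pmf A)" "finite (set_pmf B)"
  shows "(\<integral>z. f z \<partial>pair_pmf A B) = (\<integral>a. \<integral>b. f (a,b) \<partial>B \<partial>A)"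
proof -
  have "(\<integral>z. f z \<partial>pair_pmf A B) = (\<Sum>z\<in>set_pmf A \<times> set_pmf B. f z * pmf (pair_pmf A B) z)"
    using assms by (subst integral_fin) auto
  also have "\<dots> = (\<Sum>a\<in>set_pmf A. \<Sum>b\<in>set_pmf B. f (a,b) * (pmf A a * pmf B b))"
    by (simp add: sum.cartesian_product pmf_pair case_prod_beta)
       (intro sum.cong refl, metis pmf_pair prod.collapse)
  also have "\<dots> = (\<Sum>a\<in>set_pmf A. (\<Sum>b\<in>set_pmf B. f (a,b) * pmf B b) * pmf A a)"
    by (simp add: sum_distrib_left sum_distrib_right mult_ac)
  also have "\<dots> = (\<integral>a. \<integral>b. f (a,b) \<partial>B \<partial>A)"
    using assms by (simp add: integral_fin)
  finally show ?thesis .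
qed

lemma integral_swap_fin:
  fixes f :: "'a \<Rightarrow> 'b \<Rightarrow> real"
  assumes "finite (set_pmf A)" "finite (set_pmf B)"
  shows "(\<integral>a. \<integral>b. f a b \<partial>B \<partial>A) = (\<integral>b. \<integral>a. f a b \<partial>A \<partial>B)"
proof -
  have "(\<integral>a. \<integral>b. f a b \<partial>B \<partial>A) = (\<Sum>a\<in>set_pmf A. (\<Sum>b\<in>set_pmf B. f a b * pmf B b) * pmf A a)"
    using assms by (simp add: integral_fin)
  also have "\<dots> = (\<Sum>b\<in>set_pmf B. (\<Sum>a\<in>set_pmf A. f a b * pmf A a) * pmf B b)"
    by (simp add: sum_distrib_left sum_distrib_right mult_ac) (rule sum.swap)
  also have "\<dots> = (\<integral>b. \<integral>a. f a b \<partial>A \<partial>B)"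
    using assms by (simp add: integral_fin)
  finally show ?thesis .
qed

lemma integral_Pi_split:
  fixes \<phi> :: "('a \<Rightarrow> 'b) \<Rightarrow> real"
  assumes "finite S" "v \<in> S" "finite (set_pmf D)"
  shows "(\<integral>Q. \<phi> Q \<partial>Pi_pmf S d (\<lambda>_. D)) =
         (\<integral>Q. (\<integral>z. \<phi> (Q(v := z)) \<partial>D) \<partial>Pi_pmf (S - {v}) d (\<lambda>_. D))"
proof -
  have S: "S = insert v (S - {v})" using assms by auto
  have "Pi_pmf S d (\<lambda>_. D) = map_pmf (\<lambda>(y, f). f(v := y)) (pair_pmf D (Pi_pmf (S - {v}) d (\<lambda>_. D)))"
    using assms by (subst S, subst Pi_pmf_insert) auto
  then have "(\<integral>Q. \<phi> Q \<partial>Pi_pmf S d (\<lambda>_. D)) = (\<integral>z. \<integral>Q. \<phi> (Q(v := z)) \<partial>Pi_pmf (S - {v}) d (\<lambda>_. D) \<partial>D)"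
    using assms by (simp add: integral_pair_pmf_fin finite_set_Pi_pmf case_prod_beta)
  also have "\<dots> = (\<integral>Q. (\<integral>z. \<phi> (Q(v := z)) \<partial>D) \<partial>Pi_pmf (S - {v}) d (\<lambda>_. D))"
    using assms by (intro integral_swap_fin finite_set_Pi_pmf) auto
  finally show ?thesis .
qed

lemma int_out:
  fixes G H :: "('a \<Rightarrow> 'b) \<Rightarrow> real"
  assumes "finite S" "v \<in> S" "finite (set_pmf D)" "\<And>Q z. G (Q(v := z)) = G Q"
  shows "(\<integral>Q. G Q * H Q \<partial>Pi_pmf S d (\<lambda>_. D)) =
         (\<integral>Q. G Q * (\<integral>z. H (Q(v := z)) \<partial>D) \<partial>Pi_pmf S d (\<lambda>_. D))"
proof -
  have "(\<integral>Q. G Q * H Q \<partial>Pi_pmf S d (\<lambda>_. D)) =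
         (\<integral>Q. (\<integral>z. G Q * H (Q(v := z)) \<partial>D) \<partial>Pi_pmf (S - {v}) d (\<lambda>_. D))"
    using assms by (subst integral_Pi_split[of S v]) auto
  also have "\<dots> = (\<integral>Q. (\<integral>z'. G Q * (\<integral>z. H (Q(v := z)) \<partial>D) \<partial>D) \<partial>Pi_pmf (S - {v}) d (\<lambda>_. D))"
    by (simp add: integral_mult_right_zero)
  also have "\<dots> = (\<integral>Q. G Q * (\<integral>z. H (Q(v := z)) \<partial>D) \<partial>Pi_pmf S d (\<lambda>_. D))"
    using assms by (subst integral_Pi_split[of S v]) auto
  finally show ?thesis .
qed

lemma integral_component:
  fixes h :: "'b \<Rightarrow> real"
  assumes "finite S" "v \<in> S"
  shows "(\<integral>Q. h (Q v) \<partial>Pi_pmf S d (\<lambda>_. D)) = (\<integral>z. h z \<partial>D)"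
proof -
  have "(\<integral>Q. h (Q v) \<partial>Pi_pmf S d (\<lambda>_. D)) = (\<integral>z. h z \<partial>map_pmf (\<lambda>Q. Q v) (Pi_pmf S d (\<lambda>_. D)))"
    by simp
  also have "map_pmf (\<lambda>Q. Q v) (Pi_pmf S d (\<lambda>_. D)) = D"
    using assms by (simp add: Pi_pmf_component)
  finally show ?thesis .
qed



lemma FA_bound:
  fixes f :: "'b \<Rightarrow> 'b \<Rightarrow> real" and D :: "('b \<times> 'b) pmf" and a b :: int
  assumes S: "finite S" and D: "finite (set_pmf D)" and f0: "\<And>x y. f x y \<ge> 0"
    and f1: "\<And>c. (\<integral>z. f c (snd z) \<partial>D) \<le> 1" and f2: "\<And>c. (\<integral>z. f (fst z) c \<partial>D) \<le> 1"
    and ab: "a \<noteq> b"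
  shows "(\<forall>j<L. a + int j \<in> S \<and> b + int j \<in> S) \<Longrightarrow>
    (\<integral>Q. (\<Prod>j<L. f (fst (Q (a + int j))) (snd (Q (b + int j)))) \<partial>Pi_pmf S d (\<lambda>_. D)) \<le> 1"
proof (induction L)
  case 0
  then show ?case by simp
next
  case (Suc L)
  let ?M = "Pi_pmf S d (\<lambda>_. D)"
  let ?G = "\<lambda>Q. (\<Prod>j<L. f (fst (Q (a + int j))) (snd (Q (b + int j))))"
  have finM: "finite (set_pmf ?M)" using S D by (intro finite_set_Pi_pmf) auto
  have G0: "?G Q \<ge> 0" for Q by (intro prod_nonneg) (auto intro: f0)
  have IH: "(\<integral>Q. ?G Q \<partial>?M) \<le> 1" using Suc by auto
  have eq: "(\<Prod>j<Suc L. f (fst (Q (a + int j))) (snd (Q (b + int j)))) =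
      ?G Q * f (fst (Q (a + int L))) (snd (Q (b + int L)))" for Q
    by simp
  show ?case
  proof (cases "a < b")
    case True
    let ?v = "b + int L"
    have v: "?v \<in> S" using Suc.prems by auto
    have Gi: "?G (Q(?v := z)) = ?G Q" for Q z
      using True by (intro prod.cong) auto
    have "(\<integral>Q. ?G Q * f (fst (Q (a + int L))) (snd (Q ?v)) \<partial>?M) =
          (\<integral>Q. ?G Q * (\<integral>z. f (fst ((Q(?v := z)) (a + int L))) (snd ((Q(?v := z)) ?v)) \<partial>D) \<partial>?M)"
      by (rule int_out[OF S v D Gi])
    also have "\<dots> = (\<integral>Q. ?G Q * (\<integral>z. f (fst (Q (a + int L))) (snd z) \<partial>D) \<partial>?M)"
      using True by simp
    also have "\<dots> \<le> (\<integral>Q. ?G Q \<partial>?M)"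
      by (intro integral_mono integrable_measure_pmf_finite finM)
         (auto intro: mult_left_le f1 G0)
    finally show ?thesis using IH by (simp only: eq)
  next
    case False
    let ?v = "a + int L"
    have v: "?v \<in> S" using Suc.prems by auto
    have Gi: "?G (Q(?v := z)) = ?G Q" for Q z
      using False ab by (intro prod.cong) auto
    have eq2: "f (fst (Q (a + int L))) (snd (Q (b + int L))) = f (fst (Q ?v)) (snd (Q (b + int L)))" for Q
      by simp
    have "(\<integral>Q. ?G Q * f (fst (Q ?v)) (snd (Q (b + int L))) \<partial>?M) =
          (\<integral>Q. ?G Q * (\<integral>z. f (fst ((Q(?v := z)) ?v)) (snd ((Q(?v := z)) (b + int L))) \<partial>D) \<partial>?M)"
      by (rule int_out[OF S v D Gi])
    also have "\<dots> = (\<integral>Q. ?G Q * (\<integral>z. f (fst z) (snd (Q (b + int L))) \<partial>D) \<partial>?M)"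
      using False ab by simp
    also have "\<dots> \<le> (\<integral>Q. ?G Q \<partial>?M)"
      by (intro integral_mono integrable_measure_pmf_finite finM)
         (auto intro: mult_left_le f2 G0)
    finally show ?thesis using IH by (simp only: eq)
  qed
qed



definition fs :: "'x::finite pmf \<Rightarrow> ('x \<Rightarrow> 'y pmf) \<Rightarrow> 'y \<Rightarrow> 'y \<Rightarrow> real" where
  "fs PX W a b = PYY PX W a b / (PY PX W a * PY PX W b)"

lemma pmf_Q0: "pmf (Q0 PX W) (a, b) = PYY PX W a b"
  unfolding Q0_def PYY_def pmf_bind pmf_pair
  by (subst integral_measure_pmf_real[where A=UNIV]) (auto simp: mult_ac)

lemma finite_Q0: "finite (set_pmf (Q0 PX (W :: 'x::finite \<Rightarrow> 'y::finite pmf)))"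
  by (rule finite_subset[of _ UNIV]) auto

lemma integral_Q0:
  fixes PX :: "'x::finite pmf" and W :: "'x \<Rightarrow> 'y::finite pmf"
  shows "(\<integral>z. \<phi> z \<partial>Q0 PX W) = (\<Sum>a\<in>UNIV. \<Sum>b\<in>UNIV. PYY PX W a b * \<phi> (a, b))"
proof -
  have "(\<integral>z. \<phi> z \<partial>Q0 PX W) = (\<Sum>z\<in>UNIV\<times>UNIV. \<phi> z * pmf (Q0 PX W) z)"
    by (subst integral_measure_pmf_real[where A="UNIV\<times>UNIV"]) auto
  also have "\<dots> = (\<Sum>a\<in>UNIV. \<Sum>b\<in>UNIV. \<phi> (a,b) * pmf (Q0 PX W) (a,b))"
    by (simp add: sum.cartesian_product)
  finally show ?thesis by (simp add: pmf_Q0 mult_ac)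
qed

lemma PYY_nonneg: "PYY PX W a b \<ge> 0"
  unfolding PYY_def by (intro sum_nonneg mult_nonneg_nonneg) auto

lemma PYY_sym: "PYY PX W a b = PYY PX W b a"
  unfolding PYY_def by (simp add: mult_ac)

lemma PY_nonneg: "PY PX W a \<ge> 0"
  unfolding PY_def by (intro sum_nonneg mult_nonneg_nonneg) auto

lemma sum_PYY:
  fixes W :: "'x::finite \<Rightarrow> 'y::finite pmf"
  shows "(\<Sum>b\<in>UNIV. PYY PX W a b) = PY PX W a"
proof -
  have "(\<Sum>b\<in>UNIV. PYY PX W a b) = (\<Sum>x\<in>UNIV. pmf PX x * pmf (W x) a * (\<Sum>b\<in>UNIV. pmf (W x) b))"
    unfolding PYY_def by (subst sum.swap) (simp add: sum_distrib_left)
  also have "\<dots> = PY PX W a"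
    unfolding PY_def by (simp add: sum_pmf_eq_1)
  finally show ?thesis .
qed

lemma sum_PYY2:
  fixes W :: "'x::finite \<Rightarrow> 'y::finite pmf"
  shows "(\<Sum>a\<in>UNIV. PYY PX W a b) = PY PX W b"
  by (subst PYY_sym) (rule sum_PYY)

lemma PYY_le_PY:
  fixes W :: "'x::finite \<Rightarrow> 'y::finite pmf"
  shows "PYY PX W a b \<le> PY PX W a"
proof -
  have "PYY PX W a b \<le> (\<Sum>b'\<in>UNIV. PYY PX W a b')"
    by (rule member_le_sum) (auto simp: PYY_nonneg)
  then show ?thesis by (simp add: sum_PYY)
qed

lemma fs_nonneg: "fs PX W a b \<ge> 0"
  unfolding fs_def by (intro divide_nonneg_nonneg mult_nonneg_nonneg PYY_nonneg PY_nonneg)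

lemma fs_sym: "fs PX W a b = fs PX W b a"
  unfolding fs_def by (simp add: PYY_sym mult_ac)

lemma fs_int1:
  fixes PX :: "'x::finite pmf" and W :: "'x \<Rightarrow> 'y::finite pmf"
  shows "(\<integral>z. fs PX W c (snd z) \<partial>Q0 PX W) \<le> 1"
proof -
  have "(\<integral>z. fs PX W c (snd z) \<partial>Q0 PX W) = (\<Sum>b\<in>UNIV. (\<Sum>a\<in>UNIV. PYY PX W a b) * fs PX W c b)"
    by (simp add: integral_Q0 sum_distrib_right) (rule sum.swap)
  also have "\<dots> = (\<Sum>b\<in>UNIV. PY PX W b * fs PX W c b)"
    by (simp add: sum_PYY2)
  also have "\<dots> \<le> (\<Sum>b\<in>UNIV. PYY PX W c b / PY PX W c)"
  proof (intro sum_mono)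
    fix b
    show "PY PX W b * fs PX W c b \<le> PYY PX W c b / PY PX W c"
      using PY_nonneg[of PX W b] PYY_nonneg[of PX W c b] PY_nonneg[of PX W c]
      by (cases "PY PX W b = 0") (auto simp: fs_def field_simps)
  qed
  also have "\<dots> = PY PX W c / PY PX W c"
    by (simp add: sum_divide_distrib[symmetric] sum_PYY)
  also have "\<dots> \<le> 1" by (cases "PY PX W c = 0") auto
  finally show ?thesis .
qed

lemma fs_int2:
  fixes PX :: "'x::finite pmf" and W :: "'x \<Rightarrow> 'y::finite pmf"
  shows "(\<integral>z. fs PX W (fst z) c \<partial>Q0 PX W) \<le> 1"
proof -
  have "(\<integral>z. fs PX W (fst z) c \<partial>Q0 PX W) = (\<integral>z. fs PX W c (snd z) \<partial>Q0 PX W)"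
    by (simp add: integral_Q0 fs_sym[of _ _ c]) (subst sum.swap, simp add: PYY_sym)
  then show ?thesis using fs_int1 by simp
qed

lemma fs_pos_support:
  fixes PX :: "'x::finite pmf" and W :: "'x \<Rightarrow> 'y::finite pmf"
  assumes "z \<in> set_pmf (Q0 PX W)"
  shows "fs PX W (fst z) (snd z) > 0"
proof -
  obtain a b where z: "z = (a, b)" by (cases z)
  have p: "PYY PX W a b > 0"
    using assms pmf_Q0[of PX W a b] PYY_nonneg[of PX W a b] unfolding z
    by (metis pmf_positive less_eq_real_def)
  have "PY PX W a > 0" using p PYY_le_PY[of PX W a b] by linarith
  moreover have "PY PX W b > 0" using p PYY_le_PY[of PX W b a] PYY_sym[of PX W a b] by linarith
  ultimately show ?thesis using p by (simp add: z fs_def)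
qed

lemma MI_integral:
  fixes PX :: "'x::finite pmf" and W :: "'x \<Rightarrow> 'y::finite pmf"
  shows "(\<integral>z. log (real CARD('x)) (fs PX W (fst z) (snd z)) \<partial>Q0 PX W) = MI PX W"
  unfolding MI_def integral_Q0 fs_def by (intro sum.cong refl) auto

lemma MI_nonneg:
  fixes PX :: "'x::finite pmf" and W :: "'x \<Rightarrow> 'y::finite pmf"
  assumes q: "CARD('x) \<ge> 2"
  shows "MI PX W \<ge> 0"
proof -
  let ?q = "real CARD('x)"
  have lnq: "ln ?q > 0" using q by simp
  have key: "PYY PX W a b * log ?q (fs PX W a b) \<ge> (PYY PX W a b - PY PX W a * PY PX W b) / ln ?q"
    if "PYY PX W a b > 0" for a b
  proof -
    let ?p = "PYY PX W a b" and ?r = "PY PX W a * PY PX W b"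
    have pa: "PY PX W a > 0" using that PYY_le_PY[of PX W a b] by linarith
    have pb: "PY PX W b > 0" using that PYY_le_PY[of PX W b a] PYY_sym[of PX W a b] by linarith
    have r: "?r > 0" using pa pb by simp
    have "ln (?r / ?p) \<le> ?r / ?p - 1" using r that by (intro ln_le_minus_one) auto
    then have "- ln (?r / ?p) \<ge> 1 - ?r / ?p" by simp
    moreover have "ln (?p / ?r) = - ln (?r / ?p)" using r that by (simp add: ln_div)
    ultimately have "ln (?p / ?r) \<ge> 1 - ?r / ?p" by simp
    then have "?p * ln (?p / ?r) \<ge> ?p * (1 - ?r / ?p)" using that by (intro mult_left_mono) auto
    moreover have "?p * (1 - ?r / ?p) = ?p - ?r" using that by (simp add: field_simps)
    ultimately have "?p * ln (?p / ?r) \<ge> ?p - ?r" by simp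
    then have "(?p - ?r) / ln ?q \<le> (?p * ln (?p / ?r)) / ln ?q"
      using lnq by (intro divide_right_mono) auto
    moreover have "?p * log ?q (fs PX W a b) = (?p * ln (?p/?r)) / ln ?q"
      by (simp add: fs_def log_def)
    ultimately show ?thesis by simp
  qed
  have A1: "MI PX W \<ge> (\<Sum>a\<in>UNIV. \<Sum>b\<in>UNIV. (if PYY PX W a b = 0 then 0 else (PYY PX W a b - PY PX W a * PY PX W b) / ln ?q))"
    unfolding MI_def
  proof (intro sum_mono)
    fix a b
    show "(if PYY PX W a b = 0 then 0 else (PYY PX W a b - PY PX W a * PY PX W b) / ln ?q) \<le>
      (if PYY PX W a b = 0 then 0 else PYY PX W a b * log ?q (PYY PX W a b / (PY PX W a * PY PX W b)))"
      using key[of a b] PYY_nonneg[of PX W a b] by (auto simp: fs_def)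
  qed
  have A2: "(\<Sum>a\<in>UNIV. \<Sum>b\<in>UNIV. (if PYY PX W a b = 0 then 0 else (PYY PX W a b - PY PX W a * PY PX W b) / ln ?q)) \<ge> (\<Sum>a\<in>UNIV. \<Sum>b\<in>UNIV. (PYY PX W a b - PY PX W a * PY PX W b) / ln ?q)"
  proof (intro sum_mono)
    fix a b
    show "(PYY PX W a b - PY PX W a * PY PX W b) / ln ?q \<le>
      (if PYY PX W a b = 0 then 0 else (PYY PX W a b - PY PX W a * PY PX W b) / ln ?q)"
      using PY_nonneg[of PX W a] PY_nonneg[of PX W b] lnq
      by (auto intro!: divide_nonpos_pos mult_nonneg_nonneg)
  qed
  moreover have "(\<Sum>a\<in>UNIV. \<Sum>b\<in>UNIV. (PYY PX W a b - PY PX W a * PY PX W b) / ln ?q) = 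
      ((\<Sum>a\<in>UNIV. \<Sum>b\<in>UNIV. PYY PX W a b) - (\<Sum>a\<in>UNIV. PY PX W a) * (\<Sum>b\<in>UNIV. PY PX W b)) / ln ?q"
    by (simp add: sum_divide_distrib[symmetric] sum_subtractf sum_product)
  moreover have "(\<Sum>a\<in>UNIV. PY PX W a) = 1"
  proof -
    have "(\<Sum>a\<in>UNIV. PY PX W a) = (\<Sum>x\<in>UNIV. pmf PX x * (\<Sum>a\<in>UNIV. pmf (W x) a))"
      unfolding PY_def by (subst sum.swap) (simp add: sum_distrib_left)
    also have "\<dots> = 1" by (simp add: sum_pmf_eq_1)
    finally show ?thesis .
  qed
  ultimately show ?thesis using A1 A2 by (simp add: sum_PYY)
qed



lemma var_sum:
  fixes \<psi> :: "'b \<Rightarrow> real" and D :: "'b pmf" and a :: int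
  assumes S: "finite S" and D: "finite (set_pmf D)"
  defines "\<mu> \<equiv> (\<integral>z. \<psi> z \<partial>D)"
  shows "(\<forall>j<L. a + int j \<in> S) \<Longrightarrow>
    (\<integral>Q. (\<Sum>j<L. \<psi> (Q (a + int j)) - \<mu>)\<^sup>2 \<partial>Pi_pmf S d (\<lambda>_. D)) = real L * (\<integral>z. (\<psi> z - \<mu>)\<^sup>2 \<partial>D)"
proof (induction L)
  case 0
  then show ?case by simp
next
  case (Suc L)
  let ?M = "Pi_pmf S d (\<lambda>_. D)"
  let ?A = "\<lambda>Q. (\<Sum>j<L. \<psi> (Q (a + int j)) - \<mu>)"
  let ?v = "a + int L"
  have finM: "finite (set_pmf ?M)" using S D by (intro finite_set_Pi_pmf) auto
  note int = integrable_measure_pmf_finite[OF finM]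
  have v: "?v \<in> S" using Suc.prems by auto
  have IH: "(\<integral>Q. (?A Q)\<^sup>2 \<partial>?M) = real L * (\<integral>z. (\<psi> z - \<mu>)\<^sup>2 \<partial>D)" using Suc by auto
  have Ai: "?A (Q(?v := z)) = ?A Q" for Q z by (intro sum.cong) auto
  have "(\<integral>Q. ?A Q * (\<psi> (Q ?v) - \<mu>) \<partial>?M) = (\<integral>Q. ?A Q * (\<integral>z. \<psi> ((Q(?v := z)) ?v) - \<mu> \<partial>D) \<partial>?M)"
    by (rule int_out[OF S v D Ai])
  also have "(\<lambda>Q. (\<integral>z. \<psi> ((Q(?v := z)) ?v) - \<mu> \<partial>D)) = (\<lambda>Q. 0)"
    using D by (simp add: integrable_measure_pmf_finite \<mu>_def)
  finally have cross: "(\<integral>Q. ?A Q * (\<psi> (Q ?v) - \<mu>) \<partial>?M) = 0" by simp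
  have sq: "(\<integral>Q. (\<psi> (Q ?v) - \<mu>)\<^sup>2 \<partial>?M) = (\<integral>z. (\<psi> z - \<mu>)\<^sup>2 \<partial>D)"
    using S v by (rule integral_component)
  have eq: "(\<Sum>j<Suc L. \<psi> (Q (a + int j)) - \<mu>)\<^sup>2 = (?A Q)\<^sup>2 + 2 * (?A Q * (\<psi> (Q ?v) - \<mu>)) + (\<psi> (Q ?v) - \<mu>)\<^sup>2" for Q
    by (simp add: power2_eq_square algebra_simps)
  have "(\<integral>Q. (\<Sum>j<Suc L. \<psi> (Q (a + int j)) - \<mu>)\<^sup>2 \<partial>?M) =
      (\<integral>Q. (?A Q)\<^sup>2 \<partial>?M) + 2 * (\<integral>Q. ?A Q * (\<psi> (Q ?v) - \<mu>) \<partial>?M) + (\<integral>Q. (\<psi> (Q ?v) - \<mu>)\<^sup>2 \<partial>?M)"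
    unfolding eq by (simp add: int)
  also have "\<dots> = real (Suc L) * (\<integral>z. (\<psi> z - \<mu>)\<^sup>2 \<partial>D)"
    using IH cross sq by (simp add: algebra_simps)
  finally show ?case .
qed

lemma miss_bound:
  fixes f :: "'b \<Rightarrow> real" and D :: "'b pmf" and a :: int and q \<gamma> :: real
  assumes S: "finite S" and D: "finite (set_pmf D)" and pos: "\<And>z. z \<in> set_pmf D \<Longrightarrow> f z > 0"
    and q: "q > 1" and inS: "\<forall>j<L. a + int j \<in> S"
    and c: "real L * (\<integral>z. log q (f z) \<partial>D) - \<gamma> > 0"
  shows "measure_pmf.prob (Pi_pmf S d (\<lambda>_. D)) {Q. (\<Prod>j<L. f (Q (a + int j))) < q powr \<gamma>}
     \<le> real L * (\<integral>z. (log q (f z) - (\<integral>z. log q (f z) \<partial>D))\<^sup>2 \<partial>D)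
          / (real L * (\<integral>z. log q (f z) \<partial>D) - \<gamma>)\<^sup>2"
proof -
  let ?M = "Pi_pmf S d (\<lambda>_. D)"
  define \<mu> where "\<mu> = (\<integral>z. log q (f z) \<partial>D)"
  define c where "c = real L * \<mu> - \<gamma>"
  have c0: "c > 0" using c by (simp add: c_def \<mu>_def)
  let ?X = "\<lambda>Q. (\<Sum>j<L. log q (f (Q (a + int j))) - \<mu>)"
  have finM: "finite (set_pmf ?M)" using S D by (intro finite_set_Pi_pmf) auto
  have sub: "{Q. (\<Prod>j<L. f (Q (a + int j))) < q powr \<gamma>} \<inter> set_pmf ?M \<subseteq> {Q \<in> space ?M. \<bar>?X Q\<bar> \<ge> c}"
  proof
    fix Q assume Q: "Q \<in> {Q. (\<Prod>j<L. f (Q (a + int j))) < q powr \<gamma>} \<inter> set_pmf ?M"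
    have QD: "Q (a + int j) \<in> set_pmf D" if "j < L" for j
      using Q inS that S by (auto simp: set_Pi_pmf PiE_dflt_def)
    have fp: "f (Q (a + int j)) > 0" if "j < L" for j using pos QD that by auto
    have pp: "(\<Prod>j<L. f (Q (a + int j))) > 0" using fp by (intro prod_pos) auto
    have "log q (\<Prod>j<L. f (Q (a + int j))) < log q (q powr \<gamma>)"
      using Q q pp by (intro log_less) auto
    also have "log q (q powr \<gamma>) = \<gamma>" using q by simp
    also have "log q (\<Prod>j<L. f (Q (a + int j))) = (\<Sum>j<L. log q (f (Q (a + int j))))"
    proof -
      have "ln (\<Prod>j<L. f (Q (a + int j))) = (\<Sum>j<L. ln (f (Q (a + int j))))"
        using fp by (intro ln_prod) (auto dest: less_imp_neq[symmetric])
      then show ?thesis by (simp add: log_def sum_divide_distrib[symmetric])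
    qed
    finally have "(\<Sum>j<L. log q (f (Q (a + int j)))) < \<gamma>" .
    then have "?X Q < - c" by (simp add: sum_subtractf c_def)
    then show "Q \<in> {Q \<in> space ?M. \<bar>?X Q\<bar> \<ge> c}" by auto
  qed
  have "measure_pmf.prob ?M {Q. (\<Prod>j<L. f (Q (a + int j))) < q powr \<gamma>} =
        measure_pmf.prob ?M ({Q. (\<Prod>j<L. f (Q (a + int j))) < q powr \<gamma>} \<inter> set_pmf ?M)"
    by (simp add: measure_Int_set_pmf)
  also have "\<dots> \<le> measure_pmf.prob ?M {Q \<in> space ?M. \<bar>?X Q\<bar> \<ge> c}"
    using sub by (intro measure_pmf.finite_measure_mono) auto
  also have "\<dots> \<le> (\<integral>Q. (?X Q)\<^sup>2 \<partial>?M) / c\<^sup>2"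
    using c0 by (intro measure_pmf.second_moment_method integrable_measure_pmf_finite finM) auto
  also have "(\<integral>Q. (?X Q)\<^sup>2 \<partial>?M) = real L * (\<integral>z. (log q (f z) - \<mu>)\<^sup>2 \<partial>D)"
    unfolding \<mu>_def using inS by (intro var_sum S D) 
  finally show ?thesis by (simp add: c_def \<mu>_def)
qed



definition score :: "'x::finite pmf \<Rightarrow> ('x \<Rightarrow> 'y pmf) \<Rightarrow> nat \<Rightarrow> int \<Rightarrow> 'y list \<Rightarrow> 'y list \<Rightarrow> real" where
  "score PX W l t y1 y2 = (if 0 < t then (\<Prod>j<nat t. fs PX W (y1 ! (l - nat t + j)) (y2 ! j))
       else (\<Prod>j<nat (-t). fs PX W (y1 ! j) (y2 ! (l - nat (-t) + j))))"

definition detector :: "'x::finite pmf \<Rightarrow> ('x \<Rightarrow> 'y pmf) \<Rightarrow> nat \<Rightarrow> int set \<Rightarrow> real \<Rightarrow> 'y list \<Rightarrow> 'y list \<Rightarrow> int" where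
  "detector PX W l C \<theta> y1 y2 = (if \<exists>t\<in>C. \<theta> \<le> score PX W l t y1 y2
      then (SOME t. t \<in> C \<and> \<theta> \<le> score PX W l t y1 y2) else 0)"

definition proj :: "nat \<Rightarrow> int \<Rightarrow> int \<Rightarrow> (int \<Rightarrow> 'y \<times> 'y) \<Rightarrow> 'y list \<times> 'y list" where
  "proj l i1 i2 Q = (map (\<lambda>k. fst (Q (i1 + int k))) [0..<l], map (\<lambda>k. snd (Q (i2 + int k))) [0..<l])"

definition aof :: "nat \<Rightarrow> int \<Rightarrow> int \<Rightarrow> int" where "aof l i1 t = (if 0 < t then i1 + int l - t else i1)"
definition bof :: "nat \<Rightarrow> int \<Rightarrow> int \<Rightarrow> int" where "bof l i2 t = (if 0 < t then i2 else i2 + int l + t)"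

lemma score_proj:
  assumes "t \<in> Tset l" "t \<noteq> 0"
  shows "score PX W l t (fst (proj l i1 i2 Q)) (snd (proj l i1 i2 Q)) =
     (\<Prod>j<nat \<bar>t\<bar>. fs PX W (fst (Q (aof l i1 t + int j))) (snd (Q (bof l i2 t + int j))))"
proof (cases "0 < t")
  case True
  have tl: "nat t \<le> l" using assms(1) by (auto simp: Tset_def)
  have "score PX W l t (fst (proj l i1 i2 Q)) (snd (proj l i1 i2 Q)) =
     (\<Prod>j<nat t. fs PX W (fst (Q (i1 + int (l - nat t + j)))) (snd (Q (i2 + int j))))"
    using True tl unfolding score_def proj_def by (auto intro!: prod.cong)
  also have "\<dots> = (\<Prod>j<nat \<bar>t\<bar>. fs PX W (fst (Q (aof l i1 t + int j))) (snd (Q (bof l i2 t + int j))))"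
    using True tl by (intro prod.cong) (auto simp: aof_def bof_def of_nat_diff algebra_simps)
  finally show ?thesis .
next
  case False
  then have tn: "t < 0" using assms(2) by simp
  have tl: "nat (-t) \<le> l" using assms(1) by (auto simp: Tset_def)
  have "score PX W l t (fst (proj l i1 i2 Q)) (snd (proj l i1 i2 Q)) =
     (\<Prod>j<nat (-t). fs PX W (fst (Q (i1 + int j))) (snd (Q (i2 + int (l - nat (-t) + j)))))"
    using tn tl unfolding score_def proj_def by (auto intro!: prod.cong)
  also have "\<dots> = (\<Prod>j<nat \<bar>t\<bar>. fs PX W (fst (Q (aof l i1 t + int j))) (snd (Q (bof l i2 t + int j))))"
    using tn tl by (intro prod.cong) (auto simp: aof_def bof_def of_nat_diff algebra_simps)
  finally show ?thesis .
qed

lemma overlap_Tset: "l > 0 \<Longrightarrow> overlap l i1 i2 \<in> Tset l"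
  unfolding overlap_def Tset_def by auto

lemma ab_eq:
  assumes "t \<in> Tset l" "t \<noteq> 0"
  shows "aof l i1 t = bof l i2 t \<longleftrightarrow> overlap l i1 i2 = t"
  using assms unfolding aof_def bof_def overlap_def Tset_def by auto

lemma markov_pmf:
  fixes u :: "'a \<Rightarrow> real"
  assumes "\<And>x. u x \<ge> 0" "finite (set_pmf M)" "c > 0"
  shows "measure_pmf.prob M {x. c \<le> u x} \<le> (\<integral>x. u x \<partial>M) / c"
  using integral_Markov_inequality_measure[of M u UNIV c] assms
  by (auto intro: integrable_measure_pmf_finite)

lemma pos_in_S:
  assumes "t \<in> Tset l" "t \<noteq> 0" "\<forall>k<l. i1 + int k \<in> S \<and> i2 + int k \<in> S"
  shows "\<forall>j<nat \<bar>t\<bar>. aof l i1 t + int j \<in> S \<and> bof l i2 t + int j \<in> S"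
proof (intro allI impI)
  fix j assume j: "j < nat \<bar>t\<bar>"
  show "aof l i1 t + int j \<in> S \<and> bof l i2 t + int j \<in> S"
  proof (cases "0 < t")
    case True
    then have "nat t \<le> l" using assms(1) by (auto simp: Tset_def)
    then have "l - nat t + j < l" "j < l" using j True by auto
    then have "i1 + int (l - nat t + j) \<in> S" "i2 + int j \<in> S" using assms(3) by auto
    then show ?thesis using True \<open>nat t \<le> l\<close> by (simp add: aof_def bof_def of_nat_diff algebra_simps)
  next
    case False
    then have tn: "t < 0" using assms(2) by simp
    then have "nat (-t) \<le> l" using assms(1) by (auto simp: Tset_def)
    then have "l - nat (-t) + j < l" "j < l" using j tn by auto
    then have "i1 + int j \<in> S" "i2 + int (l - nat (-t) + j) \<in> S" using assms(3) by auto
    then show ?thesis using tn \<open>nat (-t) \<le> l\<close> by (simp add: aof_def bof_def of_nat_diff algebra_simps)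
  qed
qed



lemma pair_bound:
  fixes PX :: "'x::finite pmf" and W :: "'x \<Rightarrow> 'y::finite pmf"
  assumes q: "CARD('x) \<ge> 2" and l: "l > 0" and S: "finite S"
    and win: "\<forall>k<l. i1 + int k \<in> S \<and> i2 + int k \<in> S"
    and C: "C \<subseteq> Tset l - {0}"
    and th: "\<theta> = real CARD('x) powr \<gamma>"
    and miss: "\<forall>t\<in>C. real (nat \<bar>t\<bar>) * MI PX W - \<gamma> > 0 \<and>
        real (nat \<bar>t\<bar>) * (\<integral>z. (log (real CARD('x)) (fs PX W (fst z) (snd z)) - MI PX W)\<^sup>2 \<partial>Q0 PX W)
          / (real (nat \<bar>t\<bar>) * MI PX W - \<gamma>)\<^sup>2 \<le> Mb"
  shows "measure_pmf.prob (map_pmf (proj l i1 i2) (Pi_pmf S d (\<lambda>_. Q0 PX W)))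
           {(y1, y2). detector PX W l C \<theta> y1 y2 \<noteq> overlap l i1 i2}
         \<le> (if overlap l i1 i2 \<in> Tset l - {0} - C then 1 else 0)
           + (if overlap l i1 i2 \<in> C then Mb else 0) + real (card C) / \<theta>"
proof -
  let ?q = "real CARD('x)"
  let ?M = "Pi_pmf S d (\<lambda>_. Q0 PX W)"
  let ?tt = "overlap l i1 i2"
  let ?sc = "\<lambda>t Q. score PX W l t (fst (proj l i1 i2 Q)) (snd (proj l i1 i2 Q))"
  have q1: "?q > 1" using q by simp
  have th0: "\<theta> > 0" using th q1 by simp
  have finM: "finite (set_pmf ?M)" using S finite_Q0 by (intro finite_set_Pi_pmf) auto
  have finC: "finite C" using C finite_subset[of C "Tset l"] by (auto simp: Tset_def)
  have tt: "?tt \<in> Tset l" using l by (rule overlap_Tset)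
  define E1 :: "(int \<Rightarrow> 'y \<times> 'y) set" where "E1 = {Q. ?tt \<in> Tset l - {0} - C}"
  define E2 where "E2 = {Q. ?tt \<in> C \<and> ?sc ?tt Q < \<theta>}"
  define E3 where "E3 = (\<Union>t\<in>C - {?tt}. {Q. \<theta> \<le> ?sc t Q})"
  have sub: "proj l i1 i2 -` {(y1, y2). detector PX W l C \<theta> y1 y2 \<noteq> ?tt} \<subseteq> E1 \<union> E2 \<union> E3"
  proof
    fix Q assume Q: "Q \<in> proj l i1 i2 -` {(y1, y2). detector PX W l C \<theta> y1 y2 \<noteq> ?tt}"
    then have ne: "detector PX W l C \<theta> (fst (proj l i1 i2 Q)) (snd (proj l i1 i2 Q)) \<noteq> ?tt"
      by (auto simp: case_prod_beta)
    show "Q \<in> E1 \<union> E2 \<union> E3"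
    proof (cases "\<exists>t\<in>C. \<theta> \<le> ?sc t Q")
      case True
      then have ex: "\<exists>t. t \<in> C \<and> \<theta> \<le> ?sc t Q" by blast
      define t0 where "t0 = (SOME t. t \<in> C \<and> \<theta> \<le> ?sc t Q)"
      have t0: "t0 \<in> C \<and> \<theta> \<le> ?sc t0 Q" unfolding t0_def by (rule someI_ex[OF ex])
      have "detector PX W l C \<theta> (fst (proj l i1 i2 Q)) (snd (proj l i1 i2 Q)) = t0"
        using True unfolding detector_def t0_def by simp
      with ne t0 show ?thesis unfolding E3_def by auto
    next
      case False
      then have "detector PX W l C \<theta> (fst (proj l i1 i2 Q)) (snd (proj l i1 i2 Q)) = 0"
        unfolding detector_def by auto
      with ne have "?tt \<noteq> 0" by simp
      with False tt show ?thesis unfolding E1_def E2_def by force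
    qed
  qed
  have m1: "measure_pmf.prob ?M E1 \<le> (if ?tt \<in> Tset l - {0} - C then 1 else 0)"
    unfolding E1_def by auto
  have m2: "measure_pmf.prob ?M E2 \<le> (if ?tt \<in> C then Mb else 0)"
  proof (cases "?tt \<in> C")
    case False
    then show ?thesis unfolding E2_def by simp
  next
    case True
    have t0: "?tt \<noteq> 0" and tT: "?tt \<in> Tset l" using True C by auto
    have ab: "aof l i1 ?tt = bof l i2 ?tt" using ab_eq[OF tT t0] by simp
    have "E2 = {Q. (\<Prod>j<nat \<bar>?tt\<bar>. (\<lambda>z. fs PX W (fst z) (snd z)) (Q (aof l i1 ?tt + int j))) < ?q powr \<gamma>}"
      unfolding E2_def using True by (simp add: score_proj[OF tT t0] ab th)
    also have "measure_pmf.prob ?M \<dots> \<le> real (nat \<bar>?tt\<bar>) *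
        (\<integral>z. (log ?q (fs PX W (fst z) (snd z)) - (\<integral>z. log ?q (fs PX W (fst z) (snd z)) \<partial>Q0 PX W))\<^sup>2 \<partial>Q0 PX W)
          / (real (nat \<bar>?tt\<bar>) * (\<integral>z. log ?q (fs PX W (fst z) (snd z)) \<partial>Q0 PX W) - \<gamma>)\<^sup>2"
      using True miss pos_in_S[OF tT t0 win]
      by (intro miss_bound S finite_Q0 q1 fs_pos_support) (auto simp: MI_integral)
    also have "\<dots> \<le> Mb" using True miss by (simp add: MI_integral)
    finally show ?thesis using True by simp
  qed
  have fa: "measure_pmf.prob ?M {Q. \<theta> \<le> ?sc t Q} \<le> 1 / \<theta>" if t: "t \<in> C - {?tt}" for t
  proof -
    have t0: "t \<noteq> 0" and tT: "t \<in> Tset l" using t C by auto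
    have ab: "aof l i1 t \<noteq> bof l i2 t" using ab_eq[OF tT t0] t by simp
    have "measure_pmf.prob ?M {Q. \<theta> \<le> ?sc t Q} \<le> (\<integral>Q. ?sc t Q \<partial>?M) / \<theta>"
      using finM th0 by (intro markov_pmf) (auto simp: score_proj[OF tT t0] intro!: prod_nonneg fs_nonneg)
    also have "(\<integral>Q. ?sc t Q \<partial>?M) = (\<integral>Q. (\<Prod>j<nat \<bar>t\<bar>. fs PX W (fst (Q (aof l i1 t + int j))) (snd (Q (bof l i2 t + int j)))) \<partial>?M)"
      by (simp add: score_proj[OF tT t0])
    also have "\<dots> \<le> 1"
      using pos_in_S[OF tT t0 win]
      by (intro FA_bound S finite_Q0 fs_nonneg fs_int1 fs_int2 ab)
    finally show ?thesis using th0 by (simp add: divide_right_mono)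
  qed
  have m3: "measure_pmf.prob ?M E3 \<le> real (card C) / \<theta>"
  proof -
    have "measure_pmf.prob ?M E3 \<le> (\<Sum>t\<in>C - {?tt}. measure_pmf.prob ?M {Q. \<theta> \<le> ?sc t Q})"
      unfolding E3_def using finC by (intro measure_pmf.finite_measure_subadditive_finite) auto
    also have "\<dots> \<le> (\<Sum>t\<in>C - {?tt}. 1 / \<theta>)" using fa by (intro sum_mono) auto
    also have "\<dots> = real (card (C - {?tt})) / \<theta>" by simp
    also have "\<dots> \<le> real (card C) / \<theta>"
      using th0 finC by (intro divide_right_mono) (auto intro: card_mono)
    finally show ?thesis .
  qed
  have "measure_pmf.prob (map_pmf (proj l i1 i2) ?M) {(y1, y2). detector PX W l C \<theta> y1 y2 \<noteq> ?tt}
      = measure_pmf.prob ?M (proj l i1 i2 -` {(y1, y2). detector PX W l C \<theta> y1 y2 \<noteq> ?tt})" by simp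
  also have "\<dots> \<le> measure_pmf.prob ?M (E1 \<union> E2 \<union> E3)"
    using sub by (intro measure_pmf.finite_measure_mono) auto
  also have "\<dots> \<le> measure_pmf.prob ?M E1 + measure_pmf.prob ?M E2 + measure_pmf.prob ?M E3"
  proof -
    have "measure_pmf.prob ?M (E1 \<union> E2 \<union> E3) \<le> measure_pmf.prob ?M (E1 \<union> E2) + measure_pmf.prob ?M E3"
      by (intro measure_subadditive) (auto simp: measure_pmf.emeasure_finite)
    moreover have "measure_pmf.prob ?M (E1 \<union> E2) \<le> measure_pmf.prob ?M E1 + measure_pmf.prob ?M E2"
      by (intro measure_subadditive) (auto simp: measure_pmf.emeasure_finite)
    ultimately show ?thesis by linarith
  qed
  finally show ?thesis using m1 m2 m3 by linarith
qed



lemma measure_bind_pmf_real: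
  "measure_pmf.prob (bind_pmf M N) X = measure_pmf.expectation M (\<lambda>x. measure_pmf.prob (N x) X)"
proof -
  have "ennreal (measure_pmf.prob (bind_pmf M N) X) = (\<integral>\<^sup>+x. ennreal (measure_pmf.prob (N x) X) \<partial>M)"
    by (simp add: measure_pmf.emeasure_eq_measure[symmetric])
  also have "\<dots> = ennreal (measure_pmf.expectation M (\<lambda>x. measure_pmf.prob (N x) X))"
    by (intro nn_integral_eq_integral measure_pmf.integrable_const_bound[where B=1]) auto
  finally show ?thesis by (simp add: integral_nonneg)
qed

lemma card_I2set: "card (I2set n l i1) = n"
  unfolding I2set_def by auto

lemma finite_I2set: "finite (I2set n l i1)"
  unfolding I2set_def by auto

lemma window:
  assumes "i1 \<in> {1..int n}" "i2 \<in> I2set n l i1"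
  shows "\<forall>k<l. i1 + int k \<in> {- int n - 2 * int l .. int n + 2 * int l} \<and>
                i2 + int k \<in> {- int n - 2 * int l .. int n + 2 * int l}"
  using assms unfolding I2set_def by (auto split: if_splits)

lemma overlap_inj:
  assumes "overlap l i1 i2 = overlap l i1 i2'" "overlap l i1 i2 \<noteq> 0"
  shows "i2 = i2'"
  using assms unfolding overlap_def by (auto split: if_splits)

lemma count_overlap:
  assumes "finite B" "0 \<notin> B"
  shows "(\<Sum>i2\<in>I2set n l i1. if overlap l i1 i2 \<in> B then 1 else 0 :: real) \<le> real (card B)"
proof -
  have "(\<Sum>i2\<in>I2set n l i1. if overlap l i1 i2 \<in> B then 1 else 0 :: real) =
        real (card {i2 \<in> I2set n l i1. overlap l i1 i2 \<in> B})"
    using finite_I2set by (simp add: sum.If_cases Int_def)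
  also have "card {i2 \<in> I2set n l i1. overlap l i1 i2 \<in> B} \<le> card B"
  proof (rule card_inj_on_le[where f="overlap l i1"])
    show "inj_on (overlap l i1) {i2 \<in> I2set n l i1. overlap l i1 i2 \<in> B}"
    proof (rule inj_onI)
      fix x y assume "x \<in> {i2 \<in> I2set n l i1. overlap l i1 i2 \<in> B}" "y \<in> {i2 \<in> I2set n l i1. overlap l i1 i2 \<in> B}"
        "overlap l i1 x = overlap l i1 y"
      then have "overlap l i1 y \<noteq> 0" using assms(2) by force
      then show "x = y" using overlap_inj[of l i1 x y] \<open>overlap l i1 x = overlap l i1 y\<close> by simp
    qed
  qed (use assms in auto)
  finally show ?thesis by simp
qed

lemma joint_alt:
  "joint PX W l n = do {i1 \<leftarrow> pmf_of_set {1 .. int n}; i2 \<leftarrow> pmf_of_set (I2set n l i1);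
      map_pmf (\<lambda>(y1, y2). (overlap l i1 i2, y1, y2))
       (do {X \<leftarrow> Pi_pmf {- int n - 2 * int l .. int n + 2 * int l} undefined (\<lambda>_. PX);
            y1 \<leftarrow> chan W (read l X i1); y2 \<leftarrow> chan W (read l X i2); return_pmf (y1, y2)})}"
  unfolding joint_def by (simp add: map_bind_pmf map_return_pmf)

lemma read_map: "read l X i = map X (map (\<lambda>k. i + int k) [0..<l])"
  unfolding read_def by simp

lemma Perror_sum:
  fixes PX :: "'x::finite pmf" and W :: "'x \<Rightarrow> 'y::finite pmf"
  assumes n: "n > 0"
  shows "Perror PX W l n g = (\<Sum>i1\<in>{1..int n}. \<Sum>i2\<in>I2set n l i1.
     measure_pmf.prob (map_pmf (proj l i1 i2) (Pi_pmf {- int n - 2 * int l .. int n + 2 * int l} undefined (\<lambda>_. Q0 PX W)))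
       {(y1, y2). g y1 y2 \<noteq> overlap l i1 i2}) / (real n * real n)"
proof -
  let ?S = "{- int n - 2 * int l .. int n + 2 * int l}"
  let ?R = "\<lambda>i1 i2. do {X \<leftarrow> Pi_pmf ?S undefined (\<lambda>_. PX);
            y1 \<leftarrow> chan W (read l X i1); y2 \<leftarrow> chan W (read l X i2); return_pmf (y1, y2)}"
  let ?E = "{(t, y1, y2). g y1 y2 \<noteq> t}"
  have R: "?R i1 i2 = map_pmf (proj l i1 i2) (Pi_pmf ?S undefined (\<lambda>_. Q0 PX W))"
    if "i1 \<in> {1..int n}" "i2 \<in> I2set n l i1" for i1 i2
  proof -
    have w: "\<forall>k<l. i1 + int k \<in> ?S \<and> i2 + int k \<in> ?S" using window[OF that] .
    have R': "?R i1 i2 = map_pmf (\<lambda>Q. (map (\<lambda>p. fst (Q p)) (map (\<lambda>k. i1 + int k) [0..<l]),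
                                   map (\<lambda>p. snd (Q p)) (map (\<lambda>k. i2 + int k) [0..<l])))
                      (Pi_pmf ?S undefined (\<lambda>_. Q0 PX W))"
      unfolding read_map using w
      by (intro R_repr) (auto simp: distinct_map inj_on_def)
    have P: "proj l i1 i2 = (\<lambda>Q. (map (\<lambda>p. fst (Q p)) (map (\<lambda>k. i1 + int k) [0..<l]),
                                   map (\<lambda>p. snd (Q p)) (map (\<lambda>k. i2 + int k) [0..<l])))"
      by (rule ext) (simp add: proj_def)
    show ?thesis unfolding P by (rule R')
  qed
  have "Perror PX W l n g = (\<integral>i1. (\<integral>i2. measure_pmf.prob (?R i1 i2)
          {(y1, y2). g y1 y2 \<noteq> overlap l i1 i2} \<partial>pmf_of_set (I2set n l i1)) \<partial>pmf_of_set {1..int n})"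
  proof -
    have inner: "measure_pmf.prob (bind_pmf (pmf_of_set (I2set n l i1))
        (\<lambda>i2. map_pmf (\<lambda>(y1, y2). (overlap l i1 i2, y1, y2)) (?R i1 i2))) ?E =
      (\<integral>i2. measure_pmf.prob (?R i1 i2) {(y1, y2). g y1 y2 \<noteq> overlap l i1 i2} \<partial>pmf_of_set (I2set n l i1))" for i1
      unfolding measure_bind_pmf_real[of "pmf_of_set (I2set n l i1)"]
      by (intro Bochner_Integration.integral_cong refl) (simp add: vimage_def case_prod_unfold)
    show ?thesis
      unfolding Perror_def joint_alt measure_bind_pmf_real[of "pmf_of_set {1..int n}"] inner ..
  qed
  also have "\<dots> = (\<Sum>i1\<in>{1..int n}. (\<Sum>i2\<in>I2set n l i1. measure_pmf.prob (?R i1 i2)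
          {(y1, y2). g y1 y2 \<noteq> overlap l i1 i2}) / real n) / real n"
  proof -
    have ne: "I2set n l i1 \<noteq> {}" for i1 using n card_I2set[of n l i1] by (metis card.empty less_irrefl)
    show ?thesis using n ne by (simp add: integral_pmf_of_set finite_I2set card_I2set sum_divide_distrib[symmetric])
  qed
  also have "\<dots> = (\<Sum>i1\<in>{1..int n}. \<Sum>i2\<in>I2set n l i1.
     measure_pmf.prob (map_pmf (proj l i1 i2) (Pi_pmf ?S undefined (\<lambda>_. Q0 PX W)))
       {(y1, y2). g y1 y2 \<noteq> overlap l i1 i2}) / (real n * real n)"
  proof -
    have "(\<Sum>i2\<in>I2set n l i1. measure_pmf.prob (?R i1 i2) {(y1, y2). g y1 y2 \<noteq> overlap l i1 i2}) =
          (\<Sum>i2\<in>I2set n l i1. measure_pmf.prob (map_pmf (proj l i1 i2) (Pi_pmf ?S undefined (\<lambda>_. Q0 PX W)))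
             {(y1, y2). g y1 y2 \<noteq> overlap l i1 i2})" if "i1 \<in> {1..int n}" for i1
      by (intro sum.cong refl) (simp only: R[OF that])
    then show ?thesis by (simp add: sum_divide_distrib[symmetric])
  qed
  finally show ?thesis .
qed



lemma Perror_det_bound:
  fixes PX :: "'x::finite pmf" and W :: "'x \<Rightarrow> 'y::finite pmf"
  assumes q: "CARD('x) \<ge> 2" and l: "l > 0" and n: "n > 0"
    and C: "C \<subseteq> Tset l - {0}"
    and th: "\<theta> = real CARD('x) powr \<gamma>"
    and miss: "\<forall>t\<in>C. real (nat \<bar>t\<bar>) * MI PX W - \<gamma> > 0 \<and>
        real (nat \<bar>t\<bar>) * (\<integral>z. (log (real CARD('x)) (fs PX W (fst z) (snd z)) - MI PX W)\<^sup>2 \<partial>Q0 PX W)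
          / (real (nat \<bar>t\<bar>) * MI PX W - \<gamma>)\<^sup>2 \<le> Mb"
    and Mb: "Mb \<ge> 0"
  shows "Perror PX W l n (detector PX W l C \<theta>) \<le>
     real (card (Tset l - {0} - C)) / real n + Mb * real (card C) / real n + real (card C) / \<theta>"
proof -
  let ?S = "{- int n - 2 * int l .. int n + 2 * int l}"
  let ?B = "Tset l - {0} - C"
  let ?K = "real (card C) / \<theta>"
  let ?b = "\<lambda>i1 i2. (if overlap l i1 i2 \<in> ?B then 1 else 0) + Mb * (if overlap l i1 i2 \<in> C then 1 else 0) + ?K"
  have finT: "finite (Tset l)" by (simp add: Tset_def)
  have finC: "finite C" using C finT finite_subset by blast
  have pb: "measure_pmf.prob (map_pmf (proj l i1 i2) (Pi_pmf ?S undefined (\<lambda>_. Q0 PX W)))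
           {(y1, y2). detector PX W l C \<theta> y1 y2 \<noteq> overlap l i1 i2} \<le> ?b i1 i2"
    if "i1 \<in> {1..int n}" "i2 \<in> I2set n l i1" for i1 i2
  proof -
    have "measure_pmf.prob (map_pmf (proj l i1 i2) (Pi_pmf ?S undefined (\<lambda>_. Q0 PX W)))
           {(y1, y2). detector PX W l C \<theta> y1 y2 \<noteq> overlap l i1 i2} \<le>
          (if overlap l i1 i2 \<in> ?B then 1 else 0) + (if overlap l i1 i2 \<in> C then Mb else 0) + ?K"
      by (rule pair_bound[OF q l _ window[OF that] C th miss]) simp
    moreover have "(if overlap l i1 i2 \<in> C then Mb else 0) = Mb * (if overlap l i1 i2 \<in> C then 1 else 0)"
      by simp
    ultimately show ?thesis by linarith
  qed
  have inner: "(\<Sum>i2\<in>I2set n l i1. ?b i1 i2) \<le> real (card ?B) + Mb * real (card C) + real n * ?K" for i1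
  proof -
    have e1: "(\<Sum>i2\<in>I2set n l i1. ?b i1 i2) = (\<Sum>i2\<in>I2set n l i1. if overlap l i1 i2 \<in> ?B then 1 else 0)
        + Mb * (\<Sum>i2\<in>I2set n l i1. if overlap l i1 i2 \<in> C then 1 else 0) + real n * ?K"
      by (simp add: sum.distrib sum_distrib_left card_I2set)
    have c1: "(\<Sum>i2\<in>I2set n l i1. if overlap l i1 i2 \<in> ?B then 1 else 0) \<le> real (card ?B)"
      using finT by (intro count_overlap) auto
    have c2: "(\<Sum>i2\<in>I2set n l i1. if overlap l i1 i2 \<in> C then 1 else 0) \<le> real (card C)"
      using finC C by (intro count_overlap) auto
    show ?thesis unfolding e1 using c1 c2 Mb by (intro add_mono mult_left_mono order_refl) auto
  qed
  have "Perror PX W l n (detector PX W l C \<theta>) = (\<Sum>i1\<in>{1..int n}. \<Sum>i2\<in>I2set n l i1.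
     measure_pmf.prob (map_pmf (proj l i1 i2) (Pi_pmf ?S undefined (\<lambda>_. Q0 PX W)))
       {(y1, y2). detector PX W l C \<theta> y1 y2 \<noteq> overlap l i1 i2}) / (real n * real n)"
    using n by (rule Perror_sum)
  also have "\<dots> \<le> (\<Sum>i1\<in>{1..int n}. \<Sum>i2\<in>I2set n l i1. ?b i1 i2) / (real n * real n)"
    using pb by (intro divide_right_mono sum_mono) auto
  also have "\<dots> \<le> (\<Sum>i1\<in>{1..int n}. real (card ?B) + Mb * real (card C) + real n * ?K) / (real n * real n)"
    using inner by (intro divide_right_mono sum_mono) auto
  also have "\<dots> = (real (card ?B) + Mb * real (card C) + real n * ?K) / real n"
    using n by simp
  also have "\<dots> = real (card ?B) / real n + Mb * real (card C) / real n + ?K"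
    using n by (simp add: add_divide_distrib)
  finally show ?thesis .
qed



lemma detector_in:
  assumes "C \<subseteq> Tset l" "l > 0"
  shows "detector PX W l C \<theta> a b \<in> Tset l"
proof (cases "\<exists>t\<in>C. \<theta> \<le> score PX W l t a b")
  case True
  then have ex: "\<exists>t. t \<in> C \<and> \<theta> \<le> score PX W l t a b" by blast
  have "(SOME t. t \<in> C \<and> \<theta> \<le> score PX W l t a b) \<in> C" using someI_ex[OF ex] by blast
  then show ?thesis using True assms unfolding detector_def by auto
next
  case False
  then show ?thesis using assms unfolding detector_def Tset_def by auto
qed

lemma opt_le:
  fixes PX :: "'x::finite pmf" and W :: "'x \<Rightarrow> 'y::finite pmf"
  assumes "l = readlen CARD('x) \<beta> n" "l > 0" "C \<subseteq> Tset l - {0}"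
  shows "Perror_opt PX W \<beta> n \<le> Perror PX W l n (detector PX W l C \<theta>)"
proof -
  have "(INF g\<in>{g. \<forall>a b. g a b \<in> Tset l}. Perror PX W l n g) \<le> Perror PX W l n (detector PX W l C \<theta>)"
    using assms(2,3) by (intro cINF_lower) (auto intro!: bdd_belowI[of _ 0] detector_in simp: Perror_def)
  then show ?thesis using assms(1) by (simp add: Perror_opt_def Let_def)
qed

lemma card_Tset0: "l > 0 \<Longrightarrow> card (Tset l - {0}) = 2 * l - 1"
proof -
  assume l: "l > 0"
  have "0 \<in> Tset l" using l by (simp add: Tset_def)
  then have "card (Tset l - {0}) = card (Tset l) - 1" by (simp add: Tset_def)
  also have "card (Tset l) = 2 * l" using l by (simp add: Tset_def)
  finally show ?thesis .
qed

lemma log_event_ge: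
  fixes q c :: real
  assumes "q > 1"
  shows "eventually (\<lambda>n::nat. c \<le> log q (real n)) sequentially"
proof -
  have "eventually (\<lambda>n::nat. n \<ge> nat \<lceil>q powr c\<rceil> + 1) sequentially" by (rule eventually_ge_at_top)
  then show ?thesis
  proof eventually_elim
    case (elim n)
    have qc: "q powr c > 0" using assms by simp
    have "real n \<ge> q powr c" using elim by linarith
    then have "log q (q powr c) \<le> log q (real n)" using assms qc by (intro log_mono) auto
    then show ?case using assms by simp
  qed
qed

lemma readlen_le:
  fixes x :: real
  assumes "x \<ge> 0"
  shows "real (nat (round x)) \<le> x + 1/2"
  using of_int_round_le[of x] of_int_round_ge[of x] assms by linarith

lemma readlen_pos:
  fixes x :: real
  assumes "x \<ge> 1"
  shows "nat (round x) > 0"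
proof -
  have "real_of_int (round x) > 0" using of_int_round_gt[of x] assms by linarith
  then have "round x > 0" by simp
  then show ?thesis by simp
qed

lemma caseA:
  fixes PX :: "'x::finite pmf" and W :: "'x \<Rightarrow> 'y::finite pmf"
  assumes q: "CARD('x) \<ge> 2" and \<beta>: "\<beta> > 0"
  shows "eventually (\<lambda>n. Perror_opt PX W \<beta> n \<le> 2 * \<beta> * log (real CARD('x)) (real n) / real n) sequentially"
proof -
  let ?q = "real CARD('x)"
  have q1: "?q > 1" using q by simp
  have ev1: "eventually (\<lambda>n::nat. 1 / \<beta> \<le> log ?q (real n)) sequentially" using q1 by (rule log_event_ge)
  show ?thesis using ev1
  proof eventually_elim
    case (elim n)
    define l where "l = readlen CARD('x) \<beta> n"
    have x1: "\<beta> * log ?q (real n) \<ge> 1" using elim \<beta> by (simp add: field_simps)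
    have lpos: "l > 0" unfolding l_def readlen_def using x1 by (intro readlen_pos)
    have lle: "real l \<le> \<beta> * log ?q (real n) + 1/2" unfolding l_def readlen_def using x1 by (intro readlen_le) auto
    have lnn: "log ?q (real n) > 0" using x1 \<beta> by (smt (verit) mult_nonneg_nonpos)
    then have n: "n > 0" by (cases "n = 0") (auto simp: log_def)
    have "Perror_opt PX W \<beta> n \<le> Perror PX W l n (detector PX W l {} 1)"
      using lpos by (intro opt_le) (auto simp: l_def)
    also have "\<dots> \<le> real (card (Tset l - {0} - {})) / real n + 0 * real (card ({}::int set)) / real n + real (card ({}::int set)) / 1"
      using q lpos n by (intro Perror_det_bound[where \<gamma>=0]) auto
    also have "\<dots> = (2 * real l - 1) / real n" using lpos by (simp add: card_Tset0 of_nat_diff)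
    also have "\<dots> \<le> 2 * \<beta> * log ?q (real n) / real n"
      using lle n by (intro divide_right_mono) auto
    finally show ?case .
  qed
qed



lemma card_small:
  fixes m :: real
  assumes "m > 0" "B \<subseteq> {t::int. t \<noteq> 0 \<and> real_of_int \<bar>t\<bar> < m}"
  shows "real (card B) \<le> 2 * m"
proof -
  define K where "K = \<lceil>m\<rceil> - 1"
  have K0: "K \<ge> 0" using assms(1) by (simp add: K_def)
  have Km: "real_of_int K < m" unfolding K_def by linarith
  have sub: "B \<subseteq> {-K..K} - {0}"
  proof
    fix t assume "t \<in> B"
    then have "t \<noteq> 0" "real_of_int \<bar>t\<bar> < m" using assms(2) by auto
    then have "\<bar>t\<bar> < \<lceil>m\<rceil>" by linarith
    then show "t \<in> {-K..K} - {0}" using \<open>t \<noteq> 0\<close> unfolding K_def by auto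
  qed
  have "card B \<le> card ({-K..K} - {0})" by (intro card_mono sub) auto
  also have "card ({-K..K} - {0}) = nat (2 * K)" using K0 by simp
  finally have "real (card B) \<le> real (nat (2 * K))" by simp
  also have "\<dots> = 2 * real_of_int K" using K0 by simp
  finally show ?thesis using Km by linarith
qed

lemma V_nonneg: "(\<integral>z. (f z - c)\<^sup>2 \<partial>M) \<ge> (0::real)"
  by (intro integral_nonneg_AE) auto

lemma ln_powr_event:
  fixes s e :: real
  assumes "s > 0" "e > 0"
  shows "eventually (\<lambda>n::nat. ln (real n) / real n powr s < e) sequentially"
  using order_tendstoD(2)[OF lim_ln_over_power[OF assms(1)] assms(2)] .

lemma caseB:
  fixes PX :: "'x::finite pmf" and W :: "'x \<Rightarrow> 'y::finite pmf"
  assumes q: "CARD('x) \<ge> 2" and \<beta>: "\<beta> > 0" and \<mu>: "MI PX W > 0" and b\<mu>: "\<beta> * MI PX W > 1"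
    and \<delta>: "0 < \<delta>" "\<delta> \<le> 1"
  shows "eventually (\<lambda>n. Perror_opt PX W \<beta> n \<le> 2 * (1 + 2 * \<delta>) * log (real CARD('x)) (real n) / (MI PX W * real n)) sequentially"
proof -
  let ?q = "real CARD('x)"
  define \<mu> where "\<mu> = MI PX W"
  define V where "V = (\<integral>z. (log ?q (fs PX W (fst z) (snd z)) - \<mu>)\<^sup>2 \<partial>Q0 PX W)"
  define K1 where "K1 = 8 * (\<beta> + 1)\<^sup>2 * V / \<delta>\<^sup>2"
  have q1: "?q > 1" using q by simp
  have lnq: "ln ?q > 0" using q1 by simp
  have V0: "V \<ge> 0" unfolding V_def by (rule V_nonneg)
  have mu0: "\<mu> > 0" using \<mu> by (simp add: \<mu>_def)
  have K10: "K1 \<ge> 0" unfolding K1_def using V0 by simp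
  define c0 where "c0 = max 1 (max (1 / \<beta>) ((K1 + 1) * \<mu> / (2 * \<delta>)))"
  have ev1: "eventually (\<lambda>n::nat. c0 \<le> log ?q (real n)) sequentially" using q1 by (rule log_event_ge)
  have ev2: "eventually (\<lambda>n::nat. ln (real n) / real n powr (\<delta>/2) < ln ?q / (2 * (\<beta> + 1))) sequentially"
    using \<delta> lnq \<beta> by (intro ln_powr_event) auto
  show ?thesis using ev1 ev2
  proof eventually_elim
    case (elim n)
    define L where "L = log ?q (real n)"
    define l where "l = readlen CARD('x) \<beta> n"
    define \<gamma> where "\<gamma> = (1 + \<delta>/2) * L"
    define \<theta> where "\<theta> = ?q powr \<gamma>"
    define m where "m = (1 + \<delta>) * L / \<mu>"
    define C where "C = {t \<in> Tset l. t \<noteq> 0 \<and> m \<le> real_of_int \<bar>t\<bar>}"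
    define Mb where "Mb = real l * V / (\<delta> * L / 2)\<^sup>2"
    have L1: "L \<ge> 1" and Lb: "L \<ge> 1 / \<beta>" and LK: "L \<ge> (K1 + 1) * \<mu> / (2 * \<delta>)"
      using elim(1) by (auto simp: L_def c0_def)
    have n: "n > 0" using L1 by (cases "n = 0") (auto simp: L_def log_def)
    have x1: "\<beta> * L \<ge> 1" using Lb \<beta> by (simp add: field_simps)
    have lpos: "l > 0" unfolding l_def readlen_def L_def using x1 by (intro readlen_pos) (simp add: L_def)
    have lle: "real l \<le> \<beta> * L + 1/2"
    proof -
      have "real (nat (round (\<beta> * L))) \<le> \<beta> * L + 1/2" using x1 by (intro readlen_le) auto
      then show ?thesis by (simp add: l_def readlen_def L_def)
    qed
    have lle2: "real l \<le> (\<beta> + 1) * L" using lle L1 by (simp add: algebra_simps)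
    have C: "C \<subseteq> Tset l - {0}" unfolding C_def by auto
    have th: "\<theta> = ?q powr \<gamma>" by (simp add: \<theta>_def)
    have thn: "\<theta> = real n powr (1 + \<delta>/2)"
    proof -
      have "\<theta> = (?q powr L) powr (1 + \<delta>/2)" by (simp add: \<theta>_def \<gamma>_def powr_powr mult_ac)
      also have "?q powr L = real n" using n q1 by (simp add: L_def)
      finally show ?thesis .
    qed
    have Mb0: "Mb \<ge> 0" unfolding Mb_def using V0 by simp
    have miss: "\<forall>t\<in>C. real (nat \<bar>t\<bar>) * MI PX W - \<gamma> > 0 \<and>
        real (nat \<bar>t\<bar>) * (\<integral>z. (log ?q (fs PX W (fst z) (snd z)) - MI PX W)\<^sup>2 \<partial>Q0 PX W)
          / (real (nat \<bar>t\<bar>) * MI PX W - \<gamma>)\<^sup>2 \<le> Mb"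
    proof
      fix t assume t: "t \<in> C"
      have tm: "m \<le> real (nat \<bar>t\<bar>)" using t by (simp add: C_def)
      have tl: "real (nat \<bar>t\<bar>) \<le> real l" using t by (auto simp: C_def Tset_def)
      have "real (nat \<bar>t\<bar>) * \<mu> \<ge> m * \<mu>" using tm mu0 by (intro mult_right_mono) auto
      also have "m * \<mu> = (1 + \<delta>) * L" using mu0 by (simp add: m_def)
      finally have d: "real (nat \<bar>t\<bar>) * \<mu> - \<gamma> \<ge> \<delta> * L / 2" by (simp add: \<gamma>_def algebra_simps)
      have dpos: "\<delta> * L / 2 > 0" using \<delta> L1 by simp
      have "real (nat \<bar>t\<bar>) * V / (real (nat \<bar>t\<bar>) * \<mu> - \<gamma>)\<^sup>2 \<le> real l * V / (\<delta> * L / 2)\<^sup>2"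
        using tl V0 d dpos by (intro frac_le mult_right_mono power_mono) auto
      then show "real (nat \<bar>t\<bar>) * MI PX W - \<gamma> > 0 \<and>
        real (nat \<bar>t\<bar>) * (\<integral>z. (log ?q (fs PX W (fst z) (snd z)) - MI PX W)\<^sup>2 \<partial>Q0 PX W)
          / (real (nat \<bar>t\<bar>) * MI PX W - \<gamma>)\<^sup>2 \<le> Mb"
        using d dpos by (simp add: Mb_def V_def \<mu>_def)
    qed
    have bnd: "Perror_opt PX W \<beta> n \<le>
       real (card (Tset l - {0} - C)) / real n + Mb * real (card C) / real n + real (card C) / \<theta>"
      using opt_le[OF l_def lpos C, of PX W \<theta>] Perror_det_bound[OF q lpos n C th miss Mb0] by linarith
    have cB: "real (card (Tset l - {0} - C)) \<le> 2 * m"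
    proof (rule card_small)
      show "m > 0" using mu0 \<delta> L1 by (simp add: m_def)
      show "Tset l - {0} - C \<subseteq> {t. t \<noteq> 0 \<and> real_of_int \<bar>t\<bar> < m}" by (auto simp: C_def)
    qed
    have cC: "real (card C) \<le> 2 * real l"
    proof -
      have "card C \<le> card (Tset l)" using C by (intro card_mono) (auto simp: Tset_def)
      also have "card (Tset l) = 2 * l" using lpos by (simp add: Tset_def)
      finally show ?thesis by simp
    qed
    have t1: "real (card (Tset l - {0} - C)) / real n \<le> 2 * (1 + \<delta>) * L / (\<mu> * real n)"
      using cB n mu0 by (simp add: m_def divide_right_mono field_simps)
    have t2: "Mb * real (card C) \<le> K1"
    proof -
      have "Mb * real (card C) \<le> Mb * (2 * real l)" using cC Mb0 by (intro mult_left_mono) auto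
      also have "\<dots> = 8 * (real l)\<^sup>2 * V / (\<delta>\<^sup>2 * L\<^sup>2)" by (simp add: Mb_def power2_eq_square field_simps)
      also have "\<dots> \<le> 8 * ((\<beta> + 1) * L)\<^sup>2 * V / (\<delta>\<^sup>2 * L\<^sup>2)"
        using lle2 V0 \<delta> L1 by (intro divide_right_mono mult_right_mono mult_left_mono power_mono) auto
      also have "\<dots> = K1" using L1 \<delta> by (simp add: K1_def power_mult_distrib field_simps power2_eq_square)
      finally show ?thesis .
    qed
    have t3: "real (card C) / \<theta> \<le> 1 / real n"
    proof -
      have np: "real n powr (\<delta>/2) > 0" using n by simp
      have theq: "\<theta> = real n * real n powr (\<delta>/2)" using n by (simp add: thn powr_add)
      have "real (card C) / \<theta> \<le> 2 * real l / \<theta>" using cC thn n by (intro divide_right_mono) auto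
      also have "\<theta> = real n * real n powr (\<delta>/2)" using n by (simp add: thn powr_add)
      also have "2 * real l / (real n * real n powr (\<delta>/2)) \<le> 2 * ((\<beta> + 1) * L) / (real n * real n powr (\<delta>/2))"
        using lle2 n np by (intro divide_right_mono) auto
      also have "2 * ((\<beta> + 1) * L) / (real n * real n powr (\<delta>/2)) =
          (2 * (\<beta> + 1) / ln ?q) * (ln (real n) / real n powr (\<delta>/2)) / real n"
        using lnq by (simp add: L_def log_def field_simps)
      also have "\<dots> \<le> (2 * (\<beta> + 1) / ln ?q) * (ln ?q / (2 * (\<beta> + 1))) / real n"
        using elim(2) lnq \<beta> n by (intro divide_right_mono mult_left_mono) auto
      also have "\<dots> = 1 / real n" using lnq \<beta> by simp
      finally show ?thesis by (simp only: theq)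
    qed
    have fin: "(K1 + 1) \<le> 2 * \<delta> * L / \<mu>" using LK mu0 \<delta> by (simp add: field_simps)
    have "Perror_opt PX W \<beta> n \<le> 2 * (1 + \<delta>) * L / (\<mu> * real n) + K1 / real n + 1 / real n"
      using bnd t1 t2 t3 n by (smt (verit) divide_right_mono of_nat_0_less_iff)
    also have "\<dots> = 2 * (1 + \<delta>) * L / (\<mu> * real n) + (K1 + 1) / real n" by (simp add: add_divide_distrib)
    also have "\<dots> \<le> 2 * (1 + \<delta>) * L / (\<mu> * real n) + (2 * \<delta> * L / \<mu>) / real n"
      using fin n by (intro add_left_mono divide_right_mono) auto
    also have "\<dots> = 2 * (1 + 2 * \<delta>) * L / (\<mu> * real n)" using mu0 n by (simp add: field_simps)
    finally show ?case by (simp add: L_def \<mu>_def)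
  qed
qed



theorem mainTheorem3:
  fixes PX :: "'x::finite pmf" and W :: "'x \<Rightarrow> 'y::finite pmf" and \<beta> :: real
  assumes "CARD('x) \<ge> 2" and "\<beta> > 0"
  shows "\<exists>\<epsilon> :: nat \<Rightarrow> real. \<epsilon> \<longlonglongrightarrow> 0 \<and>
           (\<forall>\<^sub>F n in sequentially.
              Perror_opt PX W \<beta> n
                \<le> 2 * (1 + \<epsilon> n) * coef \<beta> (MI PX W) * log (real CARD('x)) (real n) / real n)"
proof -
  let ?q = "real CARD('x)"
  have q1: "?q > 1" using assms(1) by simp
  have MI0: "MI PX W \<ge> 0" using assms(1) by (rule MI_nonneg)
  show ?thesis
  proof (cases "MI PX W = 0 \<or> \<beta> * MI PX W \<le> 1")
    case True
    have cf: "coef \<beta> (MI PX W) = \<beta>"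
      using True MI0 assms(2) by (auto simp: coef_def min_def field_simps)
    show ?thesis
    proof (intro exI[of _ "\<lambda>_. 0"] conjI tendsto_const)
      show "\<forall>\<^sub>F n in sequentially. Perror_opt PX W \<beta> n
                \<le> 2 * (1 + 0) * coef \<beta> (MI PX W) * log ?q (real n) / real n"
        using caseA[OF assms, of PX W] by (simp add: cf)
    qed
  next
    case False
    define \<mu> where "\<mu> = MI PX W"
    have mu0: "\<mu> > 0" and bmu: "\<beta> * \<mu> > 1" using False MI0 by (auto simp: \<mu>_def)
    have cf: "coef \<beta> (MI PX W) = 1 / \<mu>"
      using mu0 bmu assms(2) by (auto simp: coef_def min_def \<mu>_def field_simps)
    define \<epsilon> where "\<epsilon> = (\<lambda>n. max 0 (Perror_opt PX W \<beta> n * (\<mu> * real n) / (2 * log ?q (real n)) - 1))"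
    have evL: "eventually (\<lambda>n::nat. 1 \<le> log ?q (real n)) sequentially" using q1 by (rule log_event_ge)
    have lim: "\<epsilon> \<longlonglongrightarrow> 0"
    proof (rule tendstoI)
      fix e :: real assume e: "e > 0"
      define \<delta> where "\<delta> = min 1 (e / 4)"
      have d: "0 < \<delta>" "\<delta> \<le> 1" "2 * \<delta> < e" using e by (auto simp: \<delta>_def)
      have ev: "eventually (\<lambda>n. Perror_opt PX W \<beta> n \<le> 2 * (1 + 2 * \<delta>) * log ?q (real n) / (\<mu> * real n)) sequentially"
        using caseB[OF assms(1) assms(2) _ _ d(1) d(2), of PX W] mu0 bmu by (simp add: \<mu>_def)
      show "eventually (\<lambda>n. dist (\<epsilon> n) 0 < e) sequentially"
        using ev evL
      proof eventually_elim
        case (elim n)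
        have L: "log ?q (real n) > 0" using elim(2) by simp
        then have n: "n > 0" by (cases "n = 0") (auto simp: log_def)
        have "Perror_opt PX W \<beta> n * (\<mu> * real n) \<le> 2 * (1 + 2 * \<delta>) * log ?q (real n)"
          using elim(1) mu0 n by (simp add: field_simps)
        then have "Perror_opt PX W \<beta> n * (\<mu> * real n) / (2 * log ?q (real n)) \<le> 1 + 2 * \<delta>"
          using L by (simp add: field_simps)
        then have "\<epsilon> n \<le> 2 * \<delta>" unfolding \<epsilon>_def using d by simp
        moreover have "\<epsilon> n \<ge> 0" unfolding \<epsilon>_def by simp
        ultimately show ?case using d by simp
      qed
    qed
    show ?thesis
    proof (intro exI[of _ \<epsilon>] conjI lim)
      show "\<forall>\<^sub>F n in sequentially. Perror_opt PX W \<beta> n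
                \<le> 2 * (1 + \<epsilon> n) * coef \<beta> (MI PX W) * log ?q (real n) / real n"
        using evL
      proof eventually_elim
        case (elim n)
        have L: "log ?q (real n) > 0" using elim by simp
        then have n: "n > 0" by (cases "n = 0") (auto simp: log_def)
        define r where "r = Perror_opt PX W \<beta> n * (\<mu> * real n) / (2 * log ?q (real n))"
        have r1: "r \<le> 1 + \<epsilon> n" unfolding r_def \<epsilon>_def by simp
        have "Perror_opt PX W \<beta> n = r * (2 * log ?q (real n)) / (\<mu> * real n)"
          using L mu0 n by (simp add: r_def field_simps)
        also have "\<dots> \<le> (1 + \<epsilon> n) * (2 * log ?q (real n)) / (\<mu> * real n)"
          using r1 L mu0 n by (intro divide_right_mono mult_right_mono) auto
        also have "\<dots> = 2 * (1 + \<epsilon> n) * coef \<beta> (MI PX W) * log ?q (real n) / real n"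
          by (simp add: cf)
        finally show ?case .
      qed
    qed
  qed
qed



end
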